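(* Let $M$ be a $3$-connected simple matroid with a $3$-connected simple minor $N$. Suppose that $x$ and $p$ are elements of $M$ such that $\{x,p\}$ is vertically $N$-contractible in $M$ but $p$ is not vertically $N$-contractible in $M$. Then $r(M)\ge 4$ and there is an $(M,N)$-vertbarrier $(C^*,p)$ with $x\in C^*$.
   Context: An element $p$ (or a set $X$) is vertically $N$-contractible in $M$ if $\mathrm{si}(M/p)$ (resp. $\mathrm{si}(M/X)$), the simplification, is a $3$-connected matroid with an $N$-minor. An $(M,N)$-vertbarrier is a pair $(C^*,p)$ where $C^*$ is a cocircuit of $M$ of rank $3$, $p\in\mathrm{cl}_M(C^* )-C^*$, and $\mathrm{si}(M/\{x,p\})$ is $3$-connected with an $N$-minor for some $x\in C^*$. *)

theory Defs
  imports Main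
begin

record 'a matroid =
  carrier :: "'a set"
  indep :: "'a set \<Rightarrow> bool"

definition matroid :: "'a matroid \<Rightarrow> bool" where
  "matroid M \<longleftrightarrow> finite (carrier M) \<and> indep M {} \<and>
     (\<forall>X. indep M X \<longrightarrow> X \<subseteq> carrier M) \<and>
     (\<forall>X Y. indep M X \<and> Y \<subseteq> X \<longrightarrow> indep M Y) \<and>
     (\<forall>X Y. indep M X \<and> indep M Y \<and> card X < card Y \<longrightarrow>
        (\<exists>e \<in> Y - X. indep M (insert e X)))"

definition rk :: "'a matroid \<Rightarrow> 'a set \<Rightarrow> nat" where
  "rk M X = Max (card ` {I. I \<subseteq> X \<and> indep M I})"

definition cl :: "'a matroid \<Rightarrow> 'a set \<Rightarrow> 'a set" where
  "cl M X = {e \<in> carrier M. rk M (insert e X) = rk M X}"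

definition basis :: "'a matroid \<Rightarrow> 'a set \<Rightarrow> bool" where
  "basis M B \<longleftrightarrow> indep M B \<and> (\<forall>X. indep M X \<and> B \<subseteq> X \<longrightarrow> X = B)"

definition circuit :: "'a matroid \<Rightarrow> 'a set \<Rightarrow> bool" where
  "circuit M C \<longleftrightarrow> C \<subseteq> carrier M \<and> \<not> indep M C \<and> (\<forall>e \<in> C. indep M (C - {e}))"

definition dual :: "'a matroid \<Rightarrow> 'a matroid" where
  "dual M = \<lparr> carrier = carrier M,
     indep = (\<lambda>I. I \<subseteq> carrier M \<and> (\<exists>B. basis M B \<and> I \<inter> B = {})) \<rparr>"

definition cocircuit :: "'a matroid \<Rightarrow> 'a set \<Rightarrow> bool" where
  "cocircuit M C \<longleftrightarrow> circuit (dual M) C"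

definition loop :: "'a matroid \<Rightarrow> 'a \<Rightarrow> bool" where
  "loop M e \<longleftrightarrow> circuit M {e}"

definition parallel :: "'a matroid \<Rightarrow> 'a \<Rightarrow> 'a \<Rightarrow> bool" where
  "parallel M e f \<longleftrightarrow> e \<noteq> f \<and> circuit M {e, f}"

definition simple :: "'a matroid \<Rightarrow> bool" where
  "simple M \<longleftrightarrow> (\<forall>C. circuit M C \<longrightarrow> card C \<ge> 3)"

definition delete :: "'a matroid \<Rightarrow> 'a set \<Rightarrow> 'a matroid" where
  "delete M X = \<lparr> carrier = carrier M - X,
     indep = (\<lambda>I. indep M I \<and> I \<subseteq> carrier M - X) \<rparr>"

definition contract :: "'a matroid \<Rightarrow> 'a set \<Rightarrow> 'a matroid" where
  "contract M X = \<lparr> carrier = carrier M - X,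
     indep = (\<lambda>I. I \<subseteq> carrier M - X \<and> rk M (I \<union> X) = card I + rk M X) \<rparr>"

definition iso :: "'a matroid \<Rightarrow> 'b matroid \<Rightarrow> bool" where
  "iso M N \<longleftrightarrow> (\<exists>f. bij_betw f (carrier M) (carrier N) \<and>
      (\<forall>X \<subseteq> carrier M. indep M X \<longleftrightarrow> indep N (f ` X)))"

definition has_minor :: "'a matroid \<Rightarrow> 'b matroid \<Rightarrow> bool" where
  "has_minor M N \<longleftrightarrow> (\<exists>C D. C \<subseteq> carrier M \<and> D \<subseteq> carrier M \<and> C \<inter> D = {} \<and>
      iso (delete (contract M C) D) N)"

definition simp_deletion :: "'a matroid \<Rightarrow> 'a set \<Rightarrow> bool" where
  "simp_deletion M D \<longleftrightarrow> D \<subseteq> carrier M \<and> (\<forall>e \<in> carrier M. loop M e \<longrightarrow> e \<in> D) \<and>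
     (\<forall>e \<in> carrier M - D. \<forall>f \<in> carrier M - D. \<not> parallel M e f) \<and>
     (\<forall>e \<in> carrier M. \<not> loop M e \<longrightarrow> (\<exists>f \<in> carrier M - D. f = e \<or> parallel M e f))"

definition si :: "'a matroid \<Rightarrow> 'a matroid" where
  "si M = delete M (SOME D. simp_deletion M D)"

definition conn_fun :: "'a matroid \<Rightarrow> 'a set \<Rightarrow> int" where
  "conn_fun M X = int (rk M X) + int (rk M (carrier M - X)) - int (rk M (carrier M))"

definition k_separation :: "'a matroid \<Rightarrow> nat \<Rightarrow> 'a set \<Rightarrow> bool" where
  "k_separation M k X \<longleftrightarrow> X \<subseteq> carrier M \<and> card X \<ge> k \<and> card (carrier M - X) \<ge> k
      \<and> conn_fun M X < int k"

definition three_connected :: "'a matroid \<Rightarrow> bool" where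
  "three_connected M \<longleftrightarrow> (\<forall>k X. k < 3 \<longrightarrow> \<not> k_separation M k X)"

text \<open>Note: a 0-separation never exists since conn_fun is nonnegative; k ranges over 1,2 effectively.\<close>

definition vert_contractible :: "'a matroid \<Rightarrow> 'b matroid \<Rightarrow> 'a set \<Rightarrow> bool" where
  "vert_contractible M N X \<longleftrightarrow> three_connected (si (contract M X)) \<and> has_minor (si (contract M X)) N"

definition vertbarrier :: "'a matroid \<Rightarrow> 'b matroid \<Rightarrow> 'a set \<Rightarrow> 'a \<Rightarrow> bool" where
  "vertbarrier M N Cs p \<longleftrightarrow> cocircuit M Cs \<and> rk M Cs = 3 \<and> p \<in> cl M Cs - Cs \<and>
     (\<exists>x \<in> Cs. three_connected (si (contract M {x, p})) \<and> has_minor (si (contract M {x, p})) N)"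

end

theory Submission
  imports Defs
begin

lemma m_indep_sub: "matroid M \<Longrightarrow> indep M I \<Longrightarrow> I \<subseteq> carrier M"
  unfolding matroid_def by blast
lemma m_fin: "matroid M \<Longrightarrow> finite (carrier M)"
  unfolding matroid_def by blast
lemma m_indep_fin: "matroid M \<Longrightarrow> indep M I \<Longrightarrow> finite I"
  using m_indep_sub m_fin finite_subset by blast
lemma m_empty: "matroid M \<Longrightarrow> indep M {}"
  unfolding matroid_def by blast
lemma m_subset: "matroid M \<Longrightarrow> indep M X \<Longrightarrow> Y \<subseteq> X \<Longrightarrow> indep M Y"
  unfolding matroid_def by blast
lemma m_aug: "matroid M \<Longrightarrow> indep M X \<Longrightarrow> indep M Y \<Longrightarrow> card X < card Y \<Longrightarrow> \<exists>e\<in>Y-X. indep M (insert e X)"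
  unfolding matroid_def by blast

lemma rk_fin: assumes "matroid M"
  shows "finite (card ` {I. I \<subseteq> X \<and> indep M I})"
proof -
  have "{I. I \<subseteq> X \<and> indep M I} \<subseteq> Pow (carrier M)" using m_indep_sub[OF assms] by blast
  then show ?thesis using m_fin[OF assms] by (meson finite_Pow_iff finite_imageI finite_subset)
qed

lemma rk_ge: "matroid M \<Longrightarrow> indep M I \<Longrightarrow> I \<subseteq> X \<Longrightarrow> card I \<le> rk M X"
  unfolding rk_def by (rule Max_ge[OF rk_fin]) auto

lemma rk_obtain: assumes "matroid M" shows "\<exists>I. I \<subseteq> X \<and> indep M I \<and> card I = rk M X"
proof -
  have ne: "card ` {I. I \<subseteq> X \<and> indep M I} \<noteq> {}" using m_empty[OF assms] by blast
  have "rk M X \<in> card ` {I. I \<subseteq> X \<and> indep M I}"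
    unfolding rk_def using Max_in[OF rk_fin[OF assms] ne] .
  then show ?thesis by auto
qed

lemma rk_max: assumes "matroid M" "indep M J" "J \<subseteq> X" "\<forall>e\<in>X-J. \<not> indep M (insert e J)"
  shows "card J = rk M X"
proof -
  obtain I where I: "I \<subseteq> X" "indep M I" "card I = rk M X" using rk_obtain[OF assms(1)] by blast
  have "\<not> card J < card I"
  proof
    assume "card J < card I"
    then obtain e where "e \<in> I - J" "indep M (insert e J)" using m_aug[OF assms(1,2) I(2)] by blast
    then show False using assms(4) I(1) by blast
  qed
  then show ?thesis using rk_ge[OF assms(1,2,3)] I by linarith
qed

lemma rk_extend: assumes "matroid M" "indep M J" "J \<subseteq> X"
  shows "\<exists>K. J \<subseteq> K \<and> K \<subseteq> X \<and> indep M K \<and> card K = rk M X"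
proof -
  let ?S = "{K. J \<subseteq> K \<and> K \<subseteq> X \<and> indep M K}"
  have fin: "finite (card ` ?S)"
  proof -
    have "?S \<subseteq> Pow (carrier M)" using m_indep_sub[OF assms(1)] by blast
    then show ?thesis using m_fin[OF assms(1)] by (meson finite_Pow_iff finite_imageI finite_subset)
  qed
  have ne: "card ` ?S \<noteq> {}" using assms by blast
  obtain K where K: "K \<in> ?S" "card K = Max (card ` ?S)" using Max_in[OF fin ne] by auto
  have "\<forall>e\<in>X-K. \<not> indep M (insert e K)"
  proof (intro ballI notI)
    fix e assume e: "e \<in> X - K" "indep M (insert e K)"
    then have "insert e K \<in> ?S" using K by auto
    then have "card (insert e K) \<le> Max (card ` ?S)" using fin by (intro Max_ge) auto
    then have "card (insert e K) \<le> card K" using K by simp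
    moreover have "finite K" using m_indep_fin[OF assms(1)] K by blast
    ultimately show False using e by simp
  qed
  then show ?thesis using rk_max[OF assms(1)] K by blast
qed

lemma rk_mono: assumes "matroid M" "X \<subseteq> Y" shows "rk M X \<le> rk M Y"
proof -
  obtain I where I: "I \<subseteq> X" "indep M I" "card I = rk M X" using rk_obtain[OF assms(1)] by blast
  show ?thesis using rk_ge[OF assms(1) I(2)] I(1,3) assms(2) by auto
qed

lemma rk_le_card: assumes "matroid M" "finite X" shows "rk M X \<le> card X"
proof -
  obtain I where I: "I \<subseteq> X" "indep M I" "card I = rk M X" using rk_obtain[OF assms(1)] by blast
  show ?thesis using card_mono[OF assms(2) I(1)] I(3) by simp
qed

lemma rk_indep: assumes "matroid M" "indep M I" shows "rk M I = card I"
proof -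
  have "rk M I \<le> card I" using rk_le_card[OF assms(1) m_indep_fin[OF assms]] .
  moreover have "card I \<le> rk M I" using rk_ge[OF assms] by blast
  ultimately show ?thesis by simp
qed

lemma rk_empty: "matroid M \<Longrightarrow> rk M {} = 0"
  using rk_le_card[of M "{}"] by simp

lemma rk_submod: assumes "matroid M"
  shows "rk M (X \<union> Y) + rk M (X \<inter> Y) \<le> rk M X + rk M Y"
proof -
  obtain J where J: "J \<subseteq> X \<inter> Y" "indep M J" "card J = rk M (X \<inter> Y)" using rk_obtain[OF assms] by blast
  have JXY: "J \<subseteq> X \<union> Y" using J(1) by blast
  obtain K where K: "J \<subseteq> K" "K \<subseteq> X \<union> Y" "indep M K" "card K = rk M (X \<union> Y)"
    using rk_extend[OF assms J(2) JXY] by blast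
  have fK: "finite K" using m_indep_fin[OF assms K(3)] .
  have iX: "indep M (K \<inter> X)" using m_subset[OF assms K(3), of "K \<inter> X"] by simp
  have iY: "indep M (K \<inter> Y)" using m_subset[OF assms K(3), of "K \<inter> Y"] by simp
  have 1: "card (K \<inter> X) \<le> rk M X" using rk_ge[OF assms iX, of X] by simp
  have 2: "card (K \<inter> Y) \<le> rk M Y" using rk_ge[OF assms iY, of Y] by simp
  have 3: "card J \<le> card (K \<inter> X \<inter> Y)" using J K fK by (intro card_mono) auto
  have "card (K \<inter> X) + card (K \<inter> Y) = card ((K \<inter> X) \<union> (K \<inter> Y)) + card ((K \<inter> X) \<inter> (K \<inter> Y))"
    using fK by (intro card_Un_Int) auto
  moreover have "(K \<inter> X) \<union> (K \<inter> Y) = K" using K(2) by blast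
  moreover have "(K \<inter> X) \<inter> (K \<inter> Y) = K \<inter> X \<inter> Y" by blast
  ultimately have eq: "card (K \<inter> X) + card (K \<inter> Y) = card K + card (K \<inter> X \<inter> Y)" by simp
  show ?thesis using 1 2 3 J(3) K(4) eq by linarith
qed

lemma rk_insert_le: assumes "matroid M" shows "rk M (insert e X) \<le> Suc (rk M X)"
proof -
  obtain I where I: "I \<subseteq> insert e X" "indep M I" "card I = rk M (insert e X)" using rk_obtain[OF assms, of "insert e X"] by blast
  have iI: "indep M (I - {e})" using m_subset[OF assms I(2), of "I - {e}"] by blast
  have "card (I - {e}) \<le> rk M X" using rk_ge[OF assms iI, of X] I(1) by blast
  moreover have "card I \<le> Suc (card (I - {e}))"
  proof -
    have fI: "finite I" using m_indep_fin[OF assms I(2)] .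
    have "card I \<le> card (insert e (I - {e}))" using fI by (intro card_mono) auto
    also have "\<dots> = Suc (card (I - {e}))" using fI by (subst card_insert_disjoint) auto
    finally show ?thesis .
  qed
  ultimately show ?thesis using I by linarith
qed

lemma rk_cl_union: assumes "matroid M" "\<forall>w\<in>W. rk M (insert w Z) = rk M Z"
  shows "rk M (Z \<union> W) = rk M Z"
proof -
  obtain J where J: "J \<subseteq> Z" "indep M J" "card J = rk M Z" using rk_obtain[OF assms(1), of Z] by blast
  have fJ: "finite J" using m_indep_fin[OF assms(1) J(2)] .
  have "\<forall>e\<in>(Z \<union> W) - J. \<not> indep M (insert e J)"
  proof (intro ballI notI)
    fix e assume e: "e \<in> (Z \<union> W) - J" "indep M (insert e J)"
    have c: "card (insert e J) = Suc (rk M Z)" using e fJ J by simp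
    show False
    proof (cases "e \<in> Z")
      case True
      then have "insert e J \<subseteq> Z" using J(1) by blast
      then have "card (insert e J) \<le> rk M Z" using rk_ge[OF assms(1) e(2), of Z] by simp
      then show ?thesis using c by simp
    next
      case False
      then have "e \<in> W" using e by blast
      then have "rk M (insert e Z) = rk M Z" using assms(2) by blast
      moreover have "insert e J \<subseteq> insert e Z" using J(1) by blast
      ultimately have "card (insert e J) \<le> rk M Z" using rk_ge[OF assms(1) e(2), of "insert e Z"] by simp
      then show ?thesis using c by simp
    qed
  qed
  moreover have "J \<subseteq> Z \<union> W" using J(1) by blast
  ultimately have "card J = rk M (Z \<union> W)" using rk_max[OF assms(1) J(2)] by simp
  then show ?thesis using J(3) by simp
qed

lemma rk_cl_mono: assumes "matroid M" "rk M (insert e A) = rk M A" "A \<subseteq> B"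
  shows "rk M (insert e B) = rk M B"
proof -
  have s: "rk M (insert e A \<union> B) + rk M (insert e A \<inter> B) \<le> rk M (insert e A) + rk M B"
    using rk_submod[OF assms(1)] .
  have u: "insert e A \<union> B = insert e B" using assms(3) by blast
  have "A \<subseteq> insert e A \<inter> B" using assms(3) by blast
  then have i: "rk M A \<le> rk M (insert e A \<inter> B)" using rk_mono[OF assms(1)] by simp
  have m: "rk M B \<le> rk M (insert e B)" using rk_mono[OF assms(1), of B "insert e B"] by blast
  have "rk M (insert e B) + rk M (insert e A \<inter> B) \<le> rk M A + rk M B" using s u assms(2) by simp
  then show ?thesis using i m by linarith
qed


definition mi :: "'a matroid \<Rightarrow> 'a set \<Rightarrow> 'a set \<Rightarrow> 'a matroid" where
  "mi M C F = \<lparr> carrier = F, indep = (\<lambda>I. I \<subseteq> F \<and> rk M (I \<union> C) = card I + rk M C) \<rparr>"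

lemma carrier_mi: "carrier (mi M C F) = F" by (simp add: mi_def)

lemma del_con_mi: "delete (contract M C) D = mi M C (carrier M - C - D)"
  unfolding delete_def contract_def mi_def by (auto simp: fun_eq_iff)

lemma rk_mi: assumes "matroid M" "F \<subseteq> carrier M"
  shows "rk (mi M C F) Y = rk M ((Y \<inter> F) \<union> C) - rk M C"
proof -
  let ?v = "rk M ((Y \<inter> F) \<union> C) - rk M C"
  let ?S = "card ` {I. I \<subseteq> Y \<and> indep (mi M C F) I}"
  have fin: "finite ?S"
  proof -
    have "{I. I \<subseteq> Y \<and> indep (mi M C F) I} \<subseteq> Pow F" by (auto simp: mi_def)
    moreover have "finite F" by (rule finite_subset[OF assms(2) m_fin[OF assms(1)]])
    ultimately show ?thesis by (meson finite_Pow_iff finite_imageI finite_subset)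
  qed
  have le: "y \<le> ?v" if ys: "y \<in> ?S" for y
  proof -
    obtain I where I0: "y = card I" "I \<in> {I. I \<subseteq> Y \<and> indep (mi M C F) I}" using ys by (rule imageE)
    have I: "I \<subseteq> Y" "I \<subseteq> F" "rk M (I \<union> C) = card I + rk M C" "y = card I"
      using I0 by (simp_all add: mi_def)
    have "I \<union> C \<subseteq> (Y \<inter> F) \<union> C" using I by blast
    then have "rk M (I \<union> C) \<le> rk M ((Y \<inter> F) \<union> C)" using rk_mono[OF assms(1)] by simp
    then show ?thesis using I(3,4) by linarith
  qed
  have mem: "?v \<in> ?S"
  proof -
    obtain J where J: "J \<subseteq> C" "indep M J" "card J = rk M C" using rk_obtain[OF assms(1), of C] by blast
    have JC: "J \<subseteq> (Y \<inter> F) \<union> C" using J(1) by blast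
    obtain K where K: "J \<subseteq> K" "K \<subseteq> (Y \<inter> F) \<union> C" "indep M K" "card K = rk M ((Y \<inter> F) \<union> C)"
      using rk_extend[OF assms(1) J(2) JC] by blast
    have fK: "finite K" using m_indep_fin[OF assms(1) K(3)] .
    have iKC: "indep M (K \<inter> C)" using m_subset[OF assms(1) K(3), of "K \<inter> C"] by simp
    have "card (K \<inter> C) \<le> rk M C" using rk_ge[OF assms(1) iKC, of C] by simp
    moreover have "J \<subseteq> K \<inter> C" using J(1) K(1) by blast
    moreover have "finite (K \<inter> C)" using fK by simp
    ultimately have KC: "J = K \<inter> C" using J(3) card_seteq[of "K \<inter> C" J] by simp
    let ?I = "K - C"
    have cK: "card K = card ?I + card (K \<inter> C)"
    proof -
      have "K = ?I \<union> (K \<inter> C)" by blast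
      moreover have "card (?I \<union> (K \<inter> C)) = card ?I + card (K \<inter> C)"
        using fK by (intro card_Un_disjoint) auto
      ultimately show ?thesis by simp
    qed
    have sub1: "K \<subseteq> ?I \<union> C" by blast
    have r1: "card K \<le> rk M (?I \<union> C)" using rk_ge[OF assms(1) K(3) sub1] .
    have sub2: "?I \<union> C \<subseteq> (Y \<inter> F) \<union> C" using K(2) by blast
    have r2: "rk M (?I \<union> C) \<le> rk M ((Y \<inter> F) \<union> C)" using rk_mono[OF assms(1) sub2] .
    have cKC: "card (K \<inter> C) = rk M C" using KC J(3) by simp
    have eq: "rk M (?I \<union> C) = card ?I + rk M C" using r1 r2 K(4) cK cKC by linarith
    have "?I \<subseteq> Y" "?I \<subseteq> F" using K(2) by blast+
    then have "?I \<in> {I. I \<subseteq> Y \<and> indep (mi M C F) I}" using eq unfolding mi_def by simp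
    then have "card ?I \<in> ?S" by (rule imageI)
    moreover have "card ?I = ?v" using cK cKC K(4) by linarith
    ultimately show ?thesis by simp
  qed
  have "Max ?S = ?v" by (rule Max_eqI[OF fin le mem])
  then show ?thesis by (simp only: rk_def[of "mi M C F" Y])
qed

lemma con_mi: assumes "matroid M" "F \<subseteq> carrier M" "C \<subseteq> F"
  shows "delete (contract (mi M C0 F) C) D = mi M (C0 \<union> C) (F - C - D)"
proof -
  have "(I \<subseteq> F - C \<and> rk (mi M C0 F) (I \<union> C) = card I + rk (mi M C0 F) C) \<and> I \<subseteq> F - C - D
     \<longleftrightarrow> I \<subseteq> F - C - D \<and> rk M (I \<union> (C0 \<union> C)) = card I + rk M (C0 \<union> C)" for I
  proof (cases "I \<subseteq> F - C - D")
    case True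
    have a: "rk (mi M C0 F) (I \<union> C) = rk M (I \<union> (C0 \<union> C)) - rk M C0"
    proof -
      have "((I \<union> C) \<inter> F) \<union> C0 = I \<union> (C0 \<union> C)" using True assms(3) by blast
      then show ?thesis using rk_mi[OF assms(1,2)] by simp
    qed
    have b: "rk (mi M C0 F) C = rk M (C0 \<union> C) - rk M C0"
    proof -
      have "(C \<inter> F) \<union> C0 = C0 \<union> C" using assms(3) by blast
      then show ?thesis using rk_mi[OF assms(1,2)] by simp
    qed
    have c1: "rk M C0 \<le> rk M (I \<union> (C0 \<union> C))" using rk_mono[OF assms(1), of C0 "I \<union> (C0 \<union> C)"] by blast
    have c2: "rk M C0 \<le> rk M (C0 \<union> C)" using rk_mono[OF assms(1), of C0 "C0 \<union> C"] by blast
    have "rk (mi M C0 F) (I \<union> C) = card I + rk (mi M C0 F) C \<longleftrightarrow> rk M (I \<union> (C0 \<union> C)) = card I + rk M (C0 \<union> C)"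
      unfolding a b using c1 c2 by (intro iffI; linarith)
    then show ?thesis using True by blast
  next
    case False
    then show ?thesis by blast
  qed
  then show ?thesis unfolding delete_def contract_def by (simp add: mi_def fun_eq_iff)
qed

lemma indep_c: "indep (contract M C) I \<longleftrightarrow> I \<subseteq> carrier M - C \<and> rk M (I \<union> C) = card I + rk M C"
  by (simp add: contract_def)
lemma carrier_c: "carrier (contract M C) = carrier M - C"
  by (simp add: contract_def)

lemma loop_c: assumes "e \<in> carrier M - C"
  shows "loop (contract M C) e \<longleftrightarrow> rk M (insert e C) \<noteq> Suc (rk M C)"
  using assms unfolding loop_def circuit_def indep_c carrier_c by simp

lemma par_c: assumes "e \<in> carrier M - C" "f \<in> carrier M - C" "e \<noteq> f"
  shows "parallel (contract M C) e f \<longleftrightarrow> rk M (insert e (insert f C)) \<noteq> Suc (Suc (rk M C))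
     \<and> rk M (insert e C) = Suc (rk M C) \<and> rk M (insert f C) = Suc (rk M C)"
proof -
  have d1: "{e, f} - {e} = {f}" "{e, f} - {f} = {e}" using assms(3) by auto
  have c: "card {e, f} = 2" using assms(3) by simp
  show ?thesis using assms unfolding parallel_def circuit_def indep_c carrier_c
    by (simp add: d1 c insert_commute conj_ac)
qed

lemma rk_ins_ge: "matroid M \<Longrightarrow> rk M X \<le> rk M (insert e X)"
  using rk_mono[of M X "insert e X"] by blast

lemma si_contract: assumes M: "matroid M" and CE: "C \<subseteq> carrier M"
  shows "\<exists>G. si (contract M C) = mi M C G \<and> G \<subseteq> carrier M - C
    \<and> (\<forall>g\<in>G. rk M (insert g C) = Suc (rk M C))
    \<and> (\<forall>g\<in>G. \<forall>g'\<in>G. g \<noteq> g' \<longrightarrow> rk M (insert g (insert g' C)) = Suc (Suc (rk M C)))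
    \<and> (\<forall>e\<in>carrier M - C. rk M (insert e C) = Suc (rk M C) \<longrightarrow>
          (\<exists>g\<in>G. rk M (insert e (insert g C)) = rk M (insert g C)))"
proof -
  define E where "E = carrier M"
  define nl where "nl = {e \<in> E - C. rk M (insert e C) = Suc (rk M C)}"
  define eqv where "eqv e f \<longleftrightarrow> rk M (insert e (insert f C)) = Suc (rk M C)" for e f
  have refl: "eqv e e" if "e \<in> nl" for e using that unfolding nl_def eqv_def by simp
  have sym: "eqv f e" if "eqv e f" for e f using that unfolding eqv_def by (simp add: insert_commute)
  have trans: "eqv e g" if t: "e \<in> nl" "f \<in> nl" "g \<in> nl" "eqv e f" "eqv f g" for e f g
  proof -
    have rf: "rk M (insert f C) = Suc (rk M C)" using t(2) unfolding nl_def by simp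
    have re: "rk M (insert e C) = Suc (rk M C)" using t(1) unfolding nl_def by simp
    have 1: "rk M (insert e (insert f C)) = rk M (insert f C)" using t(4) rf unfolding eqv_def by simp
    have 2: "rk M (insert g (insert f C)) = rk M (insert f C)" using sym[OF t(5)] rf unfolding eqv_def by simp
    have 3: "rk M (insert f C \<union> {e, g}) = rk M (insert f C)"
      using rk_cl_union[OF M, of "{e, g}" "insert f C"] 1 2 by simp
    have 4: "rk M (insert e (insert g C)) \<le> rk M (insert f C \<union> {e, g})"
      using rk_mono[OF M, of "insert e (insert g C)" "insert f C \<union> {e, g}"] by blast
    have 5: "rk M (insert e C) \<le> rk M (insert e (insert g C))"
      using rk_mono[OF M, of "insert e C" "insert e (insert g C)"] by blast
    show ?thesis unfolding eqv_def using 3 4 5 re rf by linarith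
  qed
  define rep where "rep e = (SOME f. f \<in> nl \<and> eqv f e)" for e
  have rep: "rep e \<in> nl \<and> eqv (rep e) e" if "e \<in> nl" for e
    unfolding rep_def by (rule someI[of _ e]) (simp add: that refl)
  have rep_eq: "rep e = rep e'" if r: "e \<in> nl" "e' \<in> nl" "eqv e e'" for e e'
  proof -
    have "(f \<in> nl \<and> eqv f e) = (f \<in> nl \<and> eqv f e')" for f
      using trans[of f e e'] trans[of f e' e] sym[of e e'] r by blast
    then show ?thesis unfolding rep_def by simp
  qed
  define D where "D = (E - C) - rep ` nl"
  have repsub: "rep ` nl \<subseteq> nl" using rep by blast
  have nlsub: "nl \<subseteq> E - C" unfolding nl_def by blast
  have nonloop: "e \<in> nl" if "e \<in> E - C" "\<not> loop (contract M C) e" for e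
    using that loop_c[of e M C] unfolding nl_def E_def by simp
  have h1: "D \<subseteq> carrier M - C" unfolding D_def E_def by blast
  have h2: "\<forall>e\<in>carrier M - C. loop (contract M C) e \<longrightarrow> e \<in> D"
  proof (intro ballI impI)
    fix e assume e: "e \<in> carrier M - C" "loop (contract M C) e"
    then have "e \<notin> nl" using loop_c[of e M C] unfolding nl_def by simp
    then have "e \<notin> rep ` nl" using repsub by blast
    then show "e \<in> D" using e unfolding D_def E_def by blast
  qed
  have h3: "\<forall>e\<in>carrier M - C - D. \<forall>f\<in>carrier M - C - D. \<not> parallel (contract M C) e f"
  proof (intro ballI notI)
    fix e f assume e: "e \<in> carrier M - C - D" and f: "f \<in> carrier M - C - D"
      and p: "parallel (contract M C) e f"
    obtain u where u: "u \<in> nl" "e = rep u" using e unfolding D_def E_def by blast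
    obtain v where v: "v \<in> nl" "f = rep v" using f unfolding D_def E_def by blast
    have ef: "e \<noteq> f" using p unfolding parallel_def by simp
    have pc: "rk M (insert e (insert f C)) \<noteq> Suc (Suc (rk M C))" "rk M (insert e C) = Suc (rk M C)"
      "rk M (insert f C) = Suc (rk M C)"
      using p par_c[of e M C f] e f ef by simp_all
    have a: "rk M (insert f C) \<le> rk M (insert e (insert f C))" using rk_ins_ge[OF M] .
    have b: "rk M (insert e (insert f C)) \<le> Suc (rk M (insert f C))" using rk_insert_le[OF M] .
    have eef: "eqv e f" unfolding eqv_def using pc a b by linarith
    have en: "e \<in> nl" "f \<in> nl" using u v rep by auto
    have "eqv u e" using sym rep u by blast
    then have "eqv u f" using trans[OF u(1) en(1) en(2)] eef by blast
    moreover have "eqv f v" using rep v by blast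
    ultimately have "eqv u v" using trans[OF u(1) en(2) v(1)] by blast
    then have "rep u = rep v" using rep_eq u v by blast
    then show False using u v ef by simp
  qed
  have h4: "\<forall>e\<in>carrier M - C. \<not> loop (contract M C) e \<longrightarrow>
      (\<exists>f\<in>carrier M - C - D. f = e \<or> parallel (contract M C) e f)"
  proof (intro ballI impI)
    fix e assume e: "e \<in> carrier M - C" "\<not> loop (contract M C) e"
    then have en: "e \<in> nl" using nonloop unfolding E_def by blast
    let ?f = "rep e"
    have fn: "?f \<in> nl" "eqv ?f e" using rep[OF en] by auto
    have fa: "?f \<in> rep ` nl" using en by (rule imageI)
    have fb: "?f \<in> carrier M - C" using fn(1) nlsub unfolding E_def by blast
    have fD: "?f \<in> carrier M - C - D" using fa fb unfolding D_def E_def by blast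
    have "?f = e \<or> parallel (contract M C) e ?f"
    proof (cases "?f = e")
      case False
      have r1: "rk M (insert e (insert ?f C)) = Suc (rk M C)" using sym[OF fn(2)] unfolding eqv_def .
      have r2: "rk M (insert e C) = Suc (rk M C)" "rk M (insert ?f C) = Suc (rk M C)"
        using en fn(1) unfolding nl_def by simp_all
      have "parallel (contract M C) e ?f"
        using par_c[of e M C ?f] False r1 r2 e(1) fD by auto
      then show ?thesis by blast
    qed simp
    then show "\<exists>f\<in>carrier M - C - D. f = e \<or> parallel (contract M C) e f" using fD by blast
  qed
  have sd: "simp_deletion (contract M C) D"
    unfolding simp_deletion_def carrier_c using h1 h2 h3 h4 by (intro conjI)
  define D0 where "D0 = (SOME D. simp_deletion (contract M C) D)"
  have sd0: "simp_deletion (contract M C) D0" unfolding D0_def by (rule someI[where P="simp_deletion (contract M C)", OF sd])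
  define G where "G = carrier M - C - D0"
  have siG: "si (contract M C) = mi M C G" unfolding si_def G_def D0_def[symmetric] del_con_mi carrier_c ..
  have s1: "D0 \<subseteq> carrier M - C" "\<forall>e\<in>carrier M - C. loop (contract M C) e \<longrightarrow> e \<in> D0"
    "\<forall>e\<in>carrier M - C - D0. \<forall>f\<in>carrier M - C - D0. \<not> parallel (contract M C) e f"
    "\<forall>e\<in>carrier M - C. \<not> loop (contract M C) e \<longrightarrow>
      (\<exists>f\<in>carrier M - C - D0. f = e \<or> parallel (contract M C) e f)"
    using sd0 unfolding simp_deletion_def carrier_c by blast+
  have g1: "\<forall>g\<in>G. rk M (insert g C) = Suc (rk M C)"
  proof
    fix g assume g: "g \<in> G"
    then have "\<not> loop (contract M C) g" using s1(2) unfolding G_def by blast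
    then show "rk M (insert g C) = Suc (rk M C)" using loop_c[of g M C] g unfolding G_def by simp
  qed
  have g2: "\<forall>g\<in>G. \<forall>g'\<in>G. g \<noteq> g' \<longrightarrow> rk M (insert g (insert g' C)) = Suc (Suc (rk M C))"
  proof (intro ballI impI)
    fix g g' assume g: "g \<in> G" "g' \<in> G" "g \<noteq> g'"
    have "\<not> parallel (contract M C) g g'" using s1(3) g unfolding G_def by blast
    then show "rk M (insert g (insert g' C)) = Suc (Suc (rk M C))"
      using par_c[of g M C g'] g g1 unfolding G_def by auto
  qed
  have g3: "\<forall>e\<in>carrier M - C. rk M (insert e C) = Suc (rk M C) \<longrightarrow>
          (\<exists>g\<in>G. rk M (insert e (insert g C)) = rk M (insert g C))"
  proof (intro ballI impI)
    fix e assume e: "e \<in> carrier M - C" "rk M (insert e C) = Suc (rk M C)"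
    then have "\<not> loop (contract M C) e" using loop_c[of e M C] by simp
    then obtain f where f: "f \<in> G" "f = e \<or> parallel (contract M C) e f" using s1(4) e(1) unfolding G_def by blast
    have "rk M (insert e (insert f C)) = rk M (insert f C)"
    proof (cases "f = e")
      case False
      then have pf: "parallel (contract M C) e f" using f by blast
      have ef: "e \<noteq> f" using False by simp
      have pc: "rk M (insert e (insert f C)) \<noteq> Suc (Suc (rk M C))" "rk M (insert f C) = Suc (rk M C)"
        using pf par_c[of e M C f] e(1) f(1) ef unfolding G_def by simp_all
      have a: "rk M (insert f C) \<le> rk M (insert e (insert f C))" using rk_ins_ge[OF M] .
      have b: "rk M (insert e (insert f C)) \<le> Suc (rk M (insert f C))" using rk_insert_le[OF M] .
      show ?thesis using pc a b by linarith
    qed simp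
    then show "\<exists>g\<in>G. rk M (insert e (insert g C)) = rk M (insert g C)" using f(1) by blast
  qed
  have "G \<subseteq> carrier M - C" unfolding G_def by blast
  then show ?thesis using siG g1 g2 g3 by blast
qed

lemma arith_core:
  fixes R a b a' s t k cA cB :: nat
  assumes "k < 3" "R + 1 \<le> a + b" "a + b < R + 1 + k" "a \<le> a'" "a' \<le> a + 1" "s \<le> a'" "t \<le> b"
    "2 \<le> s" "2 \<le> t" "R + 2 \<le> s + t" "cA = 0 \<Longrightarrow> s = 2" "cB = 0 \<Longrightarrow> t = 2"
    "cA = 1 \<Longrightarrow> s \<le> 3" "cB = 1 \<Longrightarrow> t \<le> 3"
    "1 \<le> cA \<Longrightarrow> 1 \<le> cB \<Longrightarrow> R + 3 \<le> s + t"
    "2 \<le> cA \<Longrightarrow> 2 \<le> cB \<Longrightarrow> R + 4 \<le> s + t"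
    "1 \<le> a" "1 \<le> b" "1 \<le> k \<Longrightarrow> 2 \<le> a" "1 \<le> k \<Longrightarrow> 2 \<le> b"
    "2 \<le> k \<Longrightarrow> 3 \<le> a" "2 \<le> k \<Longrightarrow> 3 \<le> b" "a' \<le> R" "b \<le> R"
  shows "a' = a + 1 \<and> a + 1 = R \<and> b \<le> 3 \<and> (3 \<le> b \<longrightarrow> 3 \<le> a) \<and> 2 \<le> a"
proof -
  have k1: "1 \<le> k" using assms(2,3) by linarith
  have a2: "2 \<le> a" and b2: "2 \<le> b" using assms(19,20) k1 by auto
  have ak: "k + 1 \<le> a" and bk: "k + 1 \<le> b"
  proof -
    have "k = 1 \<or> k = 2" using k1 assms(1) by linarith
    then show "k + 1 \<le> a" "k + 1 \<le> b" using a2 b2 assms(21,22) by auto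
  qed
  have cA0: "cA \<noteq> 0"
  proof
    assume "cA = 0"
    then have "s = 2" using assms(11) by simp
    then show False using assms(2,3,7,10) ak by linarith
  qed
  show ?thesis
  proof (cases "cB = 0")
    case True
    then have "t = 2" using assms(12) by simp
    then have s: "R \<le> s" using assms(10) by linarith
    have "a' \<noteq> a"
    proof
      assume "a' = a"
      then show False using s assms(3,6) bk by linarith
    qed
    then have aa: "a' = a + 1" using assms(4,5) by linarith
    then have r: "a + 1 = R" using s assms(6,23) by linarith
    have b3: "b \<le> k + 1" using r assms(3) by linarith
    have "3 \<le> b \<longrightarrow> 3 \<le> a"
    proof
      assume "3 \<le> b"
      then have "2 \<le> k" using b3 by linarith
      then show "3 \<le> a" using assms(21) by simp
    qed
    then show ?thesis using aa r b3 assms(1) a2 by auto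
  next
    case False
    have st: "R + 3 \<le> s + t" using assms(15) cA0 False by simp
    have k2: "k = 2" using st assms(1,3,5,6,7) by linarith
    have a3: "3 \<le> a" using assms(21) k2 by simp
    have aa: "a' = a + 1" using st assms(3,4,5,6,7) k2 by linarith
    have nb: "\<not> (2 \<le> cA \<and> 2 \<le> cB)" using st assms(16) assms(3,5,6,7) k2 by (auto simp: aa)
    have "cA = 1 \<or> cB = 1" using nb cA0 False by linarith
    then show ?thesis
    proof
      assume "cA = 1"
      then have "s \<le> 3" using assms(13) by simp
      then show ?thesis using st assms(7,3,24) a3 k2 by linarith
    next
      assume "cB = 1"
      then have "t \<le> 3" using assms(14) by simp
      then have "R \<le> s" using st by linarith
      then have r: "a + 1 = R" using aa assms(6,23) by linarith
      have "b \<le> 3" using r assms(3) k2 by linarith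
      then show ?thesis using aa r a3 by simp
    qed
  qed
qed

lemma simple_indep1: assumes M: "matroid M" and s: "simple M" and e: "e \<in> carrier M"
  shows "indep M {e}"
proof (rule ccontr)
  assume n: "\<not> indep M {e}"
  have "circuit M {e}" unfolding circuit_def using n e m_empty[OF M] by simp
  then have "3 \<le> card {e}" using s unfolding simple_def by blast
  then show False by simp
qed

lemma simple_one: "matroid M \<Longrightarrow> simple M \<Longrightarrow> e \<in> carrier M \<Longrightarrow> rk M {e} = 1"
  using simple_indep1 rk_indep by fastforce

lemma simple_two: assumes M: "matroid M" and s: "simple M" and e: "e \<in> carrier M" "f \<in> carrier M" "e \<noteq> f"
  shows "rk M {e, f} = 2"
proof -
  have ie: "indep M {e}" "indep M {f}" using simple_indep1[OF M s] e by auto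
  have "indep M {e, f}"
  proof (rule ccontr)
    assume n: "\<not> indep M {e, f}"
    have d: "{e, f} - {e} = {f}" "{e, f} - {f} = {e}" using e(3) by auto
    have "circuit M {e, f}" unfolding circuit_def using n e ie d by auto
    then have "3 \<le> card {e, f}" using s unfolding simple_def by blast
    then show False using e(3) by simp
  qed
  then show ?thesis using rk_indep[OF M] e(3) by simp
qed

lemma tc_conn: assumes "three_connected M'" "X \<subseteq> carrier M'" "k < 3" "k \<le> card X" "k \<le> card (carrier M' - X)"
  shows "int k \<le> conn_fun M' X"
proof -
  have "\<not> k_separation M' k X" using assms(1,3) unfolding three_connected_def by blast
  then show ?thesis using assms(2,4,5) unfolding k_separation_def by linarith
qed

lemma span_rk: assumes M: "matroid M" "Z \<subseteq> carrier M" "\<forall>e\<in>carrier M. rk M (insert e Z) = rk M Z"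
  shows "rk M Z = rk M (carrier M)"
proof -
  have "rk M (Z \<union> carrier M) = rk M Z" using rk_cl_union[OF M(1) M(3)] .
  moreover have "Z \<union> carrier M = carrier M" using M(2) by blast
  ultimately show ?thesis by simp
qed

lemma phi_rk: assumes M: "matroid M"
  and h: "\<forall>z\<in>Z. rk M (insert z (insert (\<phi> z) {p})) = rk M (insert (\<phi> z) {p})
            \<and> rk M (insert (\<phi> z) (insert z {p})) = rk M (insert z {p})"
  shows "rk M (insert p (\<phi> ` Z)) = rk M (insert p Z)"
proof -
  have 1: "\<forall>w\<in>Z. rk M (insert w (insert p (\<phi> ` Z))) = rk M (insert p (\<phi> ` Z))"
  proof
    fix w assume w: "w \<in> Z"
    have a: "rk M (insert w (insert (\<phi> w) {p})) = rk M (insert (\<phi> w) {p})" using h w by blast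
    have b: "insert (\<phi> w) {p} \<subseteq> insert p (\<phi> ` Z)" using w by blast
    show "rk M (insert w (insert p (\<phi> ` Z))) = rk M (insert p (\<phi> ` Z))" using rk_cl_mono[OF M a b] .
  qed
  have 2: "\<forall>w\<in>\<phi> ` Z. rk M (insert w (insert p Z)) = rk M (insert p Z)"
  proof
    fix w assume "w \<in> \<phi> ` Z"
    then obtain z where z: "z \<in> Z" "w = \<phi> z" by blast
    have a: "rk M (insert (\<phi> z) (insert z {p})) = rk M (insert z {p})" using h z(1) by blast
    have b: "insert z {p} \<subseteq> insert p Z" using z by blast
    show "rk M (insert w (insert p Z)) = rk M (insert p Z)" using rk_cl_mono[OF M a b] z(2) by simp
  qed
  have e1: "rk M (insert p (\<phi> ` Z) \<union> Z) = rk M (insert p (\<phi> ` Z))" using rk_cl_union[OF M 1] .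
  have e2: "rk M (insert p Z \<union> \<phi> ` Z) = rk M (insert p Z)" using rk_cl_union[OF M 2] .
  have "insert p (\<phi> ` Z) \<union> Z = insert p Z \<union> \<phi> ` Z" by blast
  then show ?thesis using e1 e2 by simp
qed

lemma basis_card: assumes M: "matroid M" and B: "basis M B" shows "card B = rk M (carrier M)"
proof -
  have iB: "indep M B" using B unfolding basis_def by blast
  have sB: "B \<subseteq> carrier M" using m_indep_sub[OF M iB] .
  have "\<forall>e\<in>carrier M - B. \<not> indep M (insert e B)"
  proof (intro ballI notI)
    fix e assume e: "e \<in> carrier M - B" "indep M (insert e B)"
    then have "insert e B = B" using B unfolding basis_def by blast
    then show False using e(1) by blast
  qed
  then show ?thesis using rk_max[OF M iB sB] by blast
qed

lemma cocircuit_compl: assumes M: "matroid M" and F: "F \<subseteq> carrier M"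
  and r: "Suc (rk M F) = rk M (carrier M)"
  and ins: "\<forall>e\<in>carrier M - F. rk M (insert e F) = Suc (rk M F)"
  shows "cocircuit M (carrier M - F)"
proof -
  let ?E = "carrier M" and ?C = "carrier M - F"
  have n: "\<not> indep (dual M) ?C"
  proof
    assume "indep (dual M) ?C"
    then obtain B where B: "basis M B" "?C \<inter> B = {}" unfolding dual_def by auto
    have iB: "indep M B" using B(1) unfolding basis_def by blast
    have "B \<subseteq> F" using m_indep_sub[OF M iB] B(2) by blast
    then have "card B \<le> rk M F" using rk_ge[OF M iB] by blast
    then show False using basis_card[OF M B(1)] r by linarith
  qed
  have y: "indep (dual M) (?C - {e})" if e: "e \<in> ?C" for e
  proof -
    have re: "rk M (insert e F) = rk M ?E" using ins e r by simp
    obtain J where J: "J \<subseteq> insert e F" "indep M J" "card J = rk M (insert e F)"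
      using rk_obtain[OF M, of "insert e F"] by blast
    have fE: "finite ?E" using m_fin[OF M] .
    have bJ: "basis M J"
      unfolding basis_def
    proof (intro conjI allI impI)
      show "indep M J" using J(2) .
      fix X assume X: "indep M X \<and> J \<subseteq> X"
      have sX: "X \<subseteq> ?E" using m_indep_sub[OF M] X by blast
      have fX: "finite X" using m_indep_fin[OF M] X by blast
      have "card X \<le> rk M ?E" using rk_ge[OF M _ sX] X by blast
      then have "card X \<le> card J" using J(3) re by simp
      then show "X = J" using card_seteq[OF fX, of J] X by blast
    qed
    have "(?C - {e}) \<inter> J = {}" using J(1) by blast
    moreover have "?C - {e} \<subseteq> ?E" by blast
    ultimately show ?thesis using bJ unfolding dual_def by auto
  qed
  have "circuit (dual M) ?C" unfolding circuit_def using n y by (simp add: dual_def)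
  then show ?thesis unfolding cocircuit_def .
qed

theorem lemma5p1:
  fixes M :: "'a matroid" and N :: "'b matroid" and x p :: 'a
  assumes "matroid M" and "three_connected M" and "simple M"
    and "matroid N" and "three_connected N" and "simple N"
    and "has_minor M N"
    and "x \<in> carrier M" and "p \<in> carrier M"
    and "vert_contractible M N {x, p}"
    and "\<not> vert_contractible M N {p}"
  shows "rk M (carrier M) \<ge> 4 \<and> (\<exists>Cs. vertbarrier M N Cs p \<and> x \<in> Cs)"
proof -
  note M = assms(1)
  define E where "E = carrier M"
  define R where "R = rk M E"
  have xE: "x \<in> E" and pE: "p \<in> E" using assms(8,9) unfolding E_def by auto
  have xp: "x \<noteq> p"
  proof
    assume "x = p"
    then have "{x, p} = {p}" by simp
    then show False using assms(10,11) by simp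
  qed
  have rp: "rk M {p} = 1" using simple_one[OF M assms(3) assms(9)] .
  have rxp: "rk M {x, p} = 2" using simple_two[OF M assms(3) assms(8,9) xp] .
  have e2: "rk M (insert e {p}) = 2" if "e \<in> E - {p}" for e
    using simple_two[OF M assms(3), of e p] that pE unfolding E_def by auto
  have CpE: "{p} \<subseteq> carrier M" and CxpE: "{x, p} \<subseteq> carrier M" using assms(8,9) by auto
  obtain G where G: "si (contract M {p}) = mi M {p} G" "G \<subseteq> carrier M - {p}"
    "\<forall>g\<in>G. rk M (insert g {p}) = Suc (rk M {p})"
    "\<forall>g\<in>G. \<forall>g'\<in>G. g \<noteq> g' \<longrightarrow> rk M (insert g (insert g' {p})) = Suc (Suc (rk M {p}))"
    "\<forall>e\<in>carrier M - {p}. rk M (insert e {p}) = Suc (rk M {p}) \<longrightarrow>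
          (\<exists>g\<in>G. rk M (insert e (insert g {p})) = rk M (insert g {p}))"
    using si_contract[OF M CpE] by blast
  obtain H where H: "si (contract M {x, p}) = mi M {x, p} H" "H \<subseteq> carrier M - {x, p}"
    "\<forall>g\<in>H. rk M (insert g {x, p}) = Suc (rk M {x, p})"
    "\<forall>g\<in>H. \<forall>g'\<in>H. g \<noteq> g' \<longrightarrow> rk M (insert g (insert g' {x, p})) = Suc (Suc (rk M {x, p}))"
    "\<forall>e\<in>carrier M - {x, p}. rk M (insert e {x, p}) = Suc (rk M {x, p}) \<longrightarrow>
          (\<exists>g\<in>H. rk M (insert e (insert g {x, p})) = rk M (insert g {x, p}))"
    using si_contract[OF M CxpE] by blast
  have GE: "G \<subseteq> E - {p}" using G(2) unfolding E_def .
  have HE: "H \<subseteq> E - {x, p}" using H(2) unfolding E_def .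
  have G3: "\<forall>g\<in>G. rk M (insert g {p}) = 2" using G(3) rp by simp
  have G4: "\<forall>g\<in>G. \<forall>g'\<in>G. g \<noteq> g' \<longrightarrow> rk M (insert g (insert g' {p})) = 3" using G(4) rp by simp
  have G5: "\<forall>e\<in>E - {p}. \<exists>g\<in>G. rk M (insert e (insert g {p})) = rk M (insert g {p})"
    using G(5) e2 rp unfolding E_def by simp
  have H3: "\<forall>g\<in>H. rk M (insert g {x, p}) = 3" using H(3) rxp by simp
  have H4: "\<forall>g\<in>H. \<forall>g'\<in>H. g \<noteq> g' \<longrightarrow> rk M (insert g (insert g' {x, p})) = 4" using H(4) rxp by simp
  have H5: "\<forall>e\<in>E - {x, p}. rk M (insert e {x, p}) = 3 \<longrightarrow>
          (\<exists>g\<in>H. rk M (insert e (insert g {x, p})) = rk M (insert g {x, p}))"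
    using H(5) rxp unfolding E_def by simp
  have fE: "finite E" using m_fin[OF M] unfolding E_def .
  have fG: "finite G" using GE fE by (meson Diff_subset finite_subset)
  have fH: "finite H" using HE fE by (meson Diff_subset finite_subset)
  define S where "S = mi M {p} G"
  define T where "T = mi M {x, p} H"
  have GE': "G \<subseteq> carrier M" and HE': "H \<subseteq> carrier M" using GE HE unfolding E_def by auto
  have rkS: "rk S Y = rk M ((Y \<inter> G) \<union> {p}) - 1" for Y
    using rk_mi[OF M GE', of "{p}" Y] rp unfolding S_def by simp
  have rkT: "rk T Y = rk M ((Y \<inter> H) \<union> {x, p}) - 2" for Y
    using rk_mi[OF M HE', of "{x, p}" Y] rxp unfolding T_def by simp
  have Tc: "three_connected T" and Tm: "has_minor T N"
    using assms(10) unfolding vert_contractible_def H(1) T_def by auto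
  define \<phi> where "\<phi> e = (SOME g. g \<in> G \<and> rk M (insert e (insert g {p})) = rk M (insert g {p}))" for e
  have phi: "\<phi> e \<in> G \<and> rk M (insert e (insert (\<phi> e) {p})) = rk M (insert (\<phi> e) {p})" if e: "e \<in> E - {p}" for e
  proof -
    obtain g where "g \<in> G \<and> rk M (insert e (insert g {p})) = rk M (insert g {p})" using G5 e by blast
    then show ?thesis unfolding \<phi>_def by (rule someI)
  qed
  have phiG: "\<phi> e \<in> G" if "e \<in> E - {p}" for e using phi[OF that] by blast
  have phi2: "rk M (insert e (insert (\<phi> e) {p})) = 2" if e: "e \<in> E - {p}" for e
    using phi[OF e] G3 by simp
  have phi_cl: "rk M (insert e (insert (\<phi> e) {p})) = rk M (insert (\<phi> e) {p})
      \<and> rk M (insert (\<phi> e) (insert e {p})) = rk M (insert e {p})" if e: "e \<in> E - {p}" for e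
  proof -
    have "rk M (insert (\<phi> e) (insert e {p})) = 2" using phi2[OF e] by (simp add: insert_commute)
    then show ?thesis using phi[OF e] e2[OF e] by simp
  qed
  have phi_id: "\<phi> g = g" if g: "g \<in> G" for g
  proof (rule ccontr)
    assume n: "\<phi> g \<noteq> g"
    have gE: "g \<in> E - {p}" using g GE by blast
    have "rk M (insert g (insert (\<phi> g) {p})) = 3" using G4 g phiG[OF gE] n by auto
    then show False using phi2[OF gE] by simp
  qed
  have inj: "inj_on \<phi> (insert x H)"
  proof (rule inj_onI, rule ccontr)
    fix u v assume u: "u \<in> insert x H" and v: "v \<in> insert x H" and eq: "\<phi> u = \<phi> v" and uv: "u \<noteq> v"
    have uE: "u \<in> E - {p}" and vE: "v \<in> E - {p}" using u v HE xE xp by auto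
    let ?g = "\<phi> u"
    have cu: "rk M (insert u (insert ?g {p})) = rk M (insert ?g {p})" using phi[OF uE] by blast
    have cv: "rk M (insert v (insert ?g {p})) = rk M (insert ?g {p})" using phi[OF vE] eq by simp
    have g2: "rk M (insert ?g {p}) = 2" using G3 phiG[OF uE] by blast
    have un: "rk M (insert ?g {p} \<union> {u, v}) = 2"
      using rk_cl_union[OF M, of "{u, v}" "insert ?g {p}"] cu cv g2 by simp
    have b3: "rk M (insert u (insert v {x, p})) \<le> 3"
    proof -
      have "rk M (insert u (insert v {x, p})) \<le> rk M (insert x (insert ?g {p} \<union> {u, v}))"
        by (rule rk_mono[OF M]) blast
      also have "\<dots> \<le> Suc (rk M (insert ?g {p} \<union> {u, v}))" by (rule rk_insert_le[OF M])
      finally show ?thesis using un by simp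
    qed
    show False
    proof (cases "u = x")
      case True
      then have vH: "v \<in> H" using v uv by blast
      have "rk M (insert v {x, p}) \<le> rk M (insert u (insert v {x, p}))" by (rule rk_mono[OF M]) blast
      moreover have "rk M (insert u (insert v {x, p})) \<le> 2"
      proof -
        have "rk M (insert u (insert v {x, p})) \<le> rk M (insert ?g {p} \<union> {u, v})"
          using True by (intro rk_mono[OF M]) blast
        then show ?thesis using un by simp
      qed
      ultimately show False using H3 vH by fastforce
    next
      case False
      then have uH: "u \<in> H" using u by blast
      show False
      proof (cases "v = x")
        case True
        have "rk M (insert u {x, p}) \<le> rk M (insert ?g {p} \<union> {u, v})"
          using True by (intro rk_mono[OF M]) blast
        then show False using un H3 uH by fastforce
      next
        case False
        then have vH: "v \<in> H" using v by blast
        show False using H4 uH vH uv b3 by fastforce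
      qed
    qed
  qed
  have SN: "has_minor S N"
  proof -
    obtain C D where CD: "C \<subseteq> carrier T" "D \<subseteq> carrier T" "C \<inter> D = {}" "iso (delete (contract T C) D) N"
      using Tm unfolding has_minor_def by blast
    have cT: "carrier T = H" unfolding T_def mi_def by simp
    have CH: "C \<subseteq> H" using CD(1) cT by simp
    define F where "F = H - C - D"
    have mT: "delete (contract T C) D = mi M ({x, p} \<union> C) F"
      unfolding T_def F_def using con_mi[OF M HE' CH] .
    obtain f where f: "bij_betw f F (carrier N)"
      "\<forall>X \<subseteq> F. indep (mi M ({x, p} \<union> C) F) X \<longleftrightarrow> indep N (f ` X)"
      using CD(4) unfolding mT iso_def by (auto simp: mi_def)
    define C' where "C' = \<phi> ` (insert x C)"
    define F' where "F' = \<phi> ` F"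
    define D' where "D' = G - C' - F'"
    have xCH: "insert x C \<subseteq> insert x H" using CH by blast
    have FH: "F \<subseteq> insert x H" unfolding F_def by blast
    have xnH: "x \<notin> H" using HE by blast
    have disj: "F \<inter> insert x C = {}" unfolding F_def using xnH by blast
    have C'G: "C' \<subseteq> G"
    proof
      fix y assume "y \<in> C'"
      then obtain e where e: "e \<in> insert x C" "y = \<phi> e" unfolding C'_def by blast
      have "e \<in> E - {p}" using e(1) CH HE xE xp by blast
      then show "y \<in> G" using phiG e(2) by blast
    qed
    have F'G: "F' \<subseteq> G"
    proof
      fix y assume "y \<in> F'"
      then obtain e where e: "e \<in> F" "y = \<phi> e" unfolding F'_def by blast
      have "e \<in> E - {p}" using e(1) HE unfolding F_def by blast
      then show "y \<in> G" using phiG e(2) by blast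
    qed
    have dF: "F' \<inter> C' = {}"
    proof -
      have "\<phi> ` (F \<inter> insert x C) = \<phi> ` F \<inter> \<phi> ` (insert x C)" using inj_on_image_Int[OF inj FH xCH] .
      then show ?thesis using disj unfolding F'_def C'_def by simp
    qed
    have rest: "G - C' - D' = F'" using F'G dF unfolding D'_def by blast
    have mS: "delete (contract S C') D' = mi M ({p} \<union> C') F'"
      using con_mi[OF M GE' C'G, of "{p}" D'] rest unfolding S_def by simp
    have injF: "inj_on \<phi> F" using inj_on_subset[OF inj FH] .
    define g where "g = f \<circ> the_inv_into F \<phi>"
    have bg: "bij_betw g F' (carrier N)"
    proof -
      have "bij_betw \<phi> F F'" unfolding F'_def using inj_on_imp_bij_betw[OF injF] .
      then have "bij_betw (the_inv_into F \<phi>) F' F" by (rule bij_betw_the_inv_into)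
      then show ?thesis unfolding g_def using bij_betw_trans f(1) by blast
    qed
    have ZE: "Z \<subseteq> insert x H \<Longrightarrow> \<forall>z\<in>Z. rk M (insert z (insert (\<phi> z) {p})) = rk M (insert (\<phi> z) {p})
            \<and> rk M (insert (\<phi> z) (insert z {p})) = rk M (insert z {p})" for Z
    proof
      fix z assume "Z \<subseteq> insert x H" "z \<in> Z"
      then have "z \<in> E - {p}" using HE xE xp by blast
      then show "rk M (insert z (insert (\<phi> z) {p})) = rk M (insert (\<phi> z) {p})
            \<and> rk M (insert (\<phi> z) (insert z {p})) = rk M (insert z {p})" using phi_cl by blast
    qed
    have r2: "rk M ({p} \<union> C') = rk M ({x, p} \<union> C)"
    proof -
      have "rk M (insert p (\<phi> ` (insert x C))) = rk M (insert p (insert x C))"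
        using phi_rk[OF M ZE[OF xCH]] .
      moreover have "{p} \<union> C' = insert p (\<phi> ` (insert x C))" unfolding C'_def by blast
      moreover have "{x, p} \<union> C = insert p (insert x C)" by blast
      ultimately show ?thesis by simp
    qed
    have ind: "\<forall>X \<subseteq> F'. indep (mi M ({p} \<union> C') F') X \<longleftrightarrow> indep N (g ` X)"
    proof (intro allI impI)
      fix X assume X: "X \<subseteq> F'"
      obtain Y where Y: "Y \<subseteq> F" "X = \<phi> ` Y" using X unfolding F'_def by (auto simp: subset_image_iff)
      have inv: "the_inv_into F \<phi> ` X = Y"
      proof -
        have "the_inv_into F \<phi> ` (\<phi> ` Y) = (\<lambda>y. the_inv_into F \<phi> (\<phi> y)) ` Y" by (simp add: image_image)
        also have "\<dots> = (\<lambda>y. y) ` Y" using the_inv_into_f_f[OF injF] Y(1) by (intro image_cong) auto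
        finally show ?thesis using Y(2) by simp
      qed
      have gX: "g ` X = f ` Y" unfolding g_def image_comp[symmetric] inv ..
      have cX: "card X = card Y" using card_image[OF inj_on_subset[OF injF Y(1)]] Y(2) by simp
      have YZ: "Y \<union> insert x C \<subseteq> insert x H" using Y(1) FH xCH by blast
      have r1: "rk M (X \<union> ({p} \<union> C')) = rk M (Y \<union> ({x, p} \<union> C))"
      proof -
        have "rk M (insert p (\<phi> ` (Y \<union> insert x C))) = rk M (insert p (Y \<union> insert x C))"
          using phi_rk[OF M ZE[OF YZ]] .
        moreover have "X \<union> ({p} \<union> C') = insert p (\<phi> ` (Y \<union> insert x C))" unfolding C'_def Y(2) by blast
        moreover have "Y \<union> ({x, p} \<union> C) = insert p (Y \<union> insert x C)" by blast
        ultimately show ?thesis by simp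
      qed
      have XF: "X \<subseteq> F'" using X .
      have "indep (mi M ({p} \<union> C') F') X \<longleftrightarrow> indep (mi M ({x, p} \<union> C) F) Y"
        unfolding mi_def using XF Y(1) r1 r2 cX by simp
      also have "\<dots> \<longleftrightarrow> indep N (f ` Y)" using f(2) Y(1) by blast
      finally show "indep (mi M ({p} \<union> C') F') X \<longleftrightarrow> indep N (g ` X)" using gX by simp
    qed
    have iso: "iso (delete (contract S C') D') N"
      unfolding iso_def mS carrier_mi using bg ind by blast
    have cS: "carrier S = G" unfolding S_def mi_def by simp
    have "C' \<subseteq> carrier S" "D' \<subseteq> carrier S" "C' \<inter> D' = {}" using C'G cS unfolding D'_def by auto
    then show ?thesis unfolding has_minor_def using iso by blast
  qed
  have nS: "\<not> three_connected S"
    using assms(11) SN unfolding vert_contractible_def G(1) S_def by blast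
  obtain k X where kX: "k < 3" "k_separation S k X" using nS unfolding three_connected_def by blast
  have core: "rk M (carrier M) \<ge> 4 \<and> (\<exists>Cs. vertbarrier M N Cs p \<and> x \<in> Cs)"
    if A: "A \<subseteq> G" "k \<le> card A" "k \<le> card (G - A)" "rk M (A \<union> {p}) + rk M ((G - A) \<union> {p}) < R + 1 + k"
      "\<phi> x \<in> G - A" for A
  proof -
    define B where "B = G - A"
    have BG: "B \<subseteq> G" unfolding B_def by blast
    define As where "As = {e \<in> E - {p}. \<phi> e \<in> A}"
    define Bs where "Bs = {e \<in> E - {p}. \<phi> e \<in> B}"
    have star: "rk M ({e \<in> E - {p}. \<phi> e \<in> Q} \<union> {p}) = rk M (Q \<union> {p})" if Q: "Q \<subseteq> G" for Q
    proof -
      let ?Qs = "{e \<in> E - {p}. \<phi> e \<in> Q}"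
      have QQs: "Q \<subseteq> ?Qs"
      proof
        fix g assume g: "g \<in> Q"
        then have "g \<in> G" using Q by blast
        then show "g \<in> ?Qs" using g GE phi_id by auto
      qed
      have "\<forall>w\<in>?Qs. rk M (insert w (Q \<union> {p})) = rk M (Q \<union> {p})"
      proof
        fix w assume w: "w \<in> ?Qs"
        then have wE: "w \<in> E - {p}" by blast
        have a: "rk M (insert w (insert (\<phi> w) {p})) = rk M (insert (\<phi> w) {p})" using phi[OF wE] by blast
        have b: "insert (\<phi> w) {p} \<subseteq> Q \<union> {p}" using w by blast
        show "rk M (insert w (Q \<union> {p})) = rk M (Q \<union> {p})" using rk_cl_mono[OF M a b] .
      qed
      then have "rk M ((Q \<union> {p}) \<union> ?Qs) = rk M (Q \<union> {p})" using rk_cl_union[OF M] by blast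
      moreover have "(Q \<union> {p}) \<union> ?Qs = ?Qs \<union> {p}" using QQs by blast
      ultimately show ?thesis by simp
    qed
    have two: "2 \<le> rk M (Q \<union> {p})" if Q: "Q \<subseteq> G" "1 \<le> card Q" for Q
    proof -
      obtain g where g: "g \<in> Q" using Q(2) by fastforce
      have "rk M (insert g {p}) \<le> rk M (Q \<union> {p})" using g by (intro rk_mono[OF M]) blast
      then show ?thesis using G3 g Q(1) by fastforce
    qed
    have three: "3 \<le> rk M (Q \<union> {p})" if Q: "Q \<subseteq> G" "2 \<le> card Q" for Q
    proof -
      have fQ: "finite Q" using finite_subset[OF Q(1) fG] .
      obtain g where g: "g \<in> Q" using Q(2) by fastforce
      have "card (Q - {g}) = card Q - 1" using fQ g by simp
      then have c1: "1 \<le> card (Q - {g})" using Q(2) by linarith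
      have "Q - {g} \<noteq> {}"
      proof
        assume "Q - {g} = {}"
        then show False using c1 by (simp only: card.empty)
      qed
      then obtain g' where g': "g' \<in> Q - {g}" by blast
      have "rk M (insert g (insert g' {p})) \<le> rk M (Q \<union> {p})" using g g' by (intro rk_mono[OF M]) blast
      moreover have "rk M (insert g (insert g' {p})) = 3"
      proof -
        have "g \<in> G" "g' \<in> G" "g \<noteq> g'" using g g' Q(1) by auto
        then show ?thesis using G4 by simp
      qed
      ultimately show ?thesis by simp
    qed
    define a where "a = rk M (As \<union> {p})"
    define b where "b = rk M (Bs \<union> {p})"
    have a_eq: "a = rk M (A \<union> {p})" unfolding a_def As_def using star[OF A(1)] .
    have b_eq: "b = rk M (B \<union> {p})" unfolding b_def Bs_def using star[OF BG] .
    have Eparts: "E = As \<union> Bs \<union> {p}"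
    proof
      show "E \<subseteq> As \<union> Bs \<union> {p}"
      proof
        fix e assume e: "e \<in> E"
        show "e \<in> As \<union> Bs \<union> {p}"
        proof (cases "e = p")
          case False
          then have "e \<in> E - {p}" using e by blast
          then have "\<phi> e \<in> G" using phiG by blast
          then show ?thesis using False e unfolding As_def Bs_def B_def by blast
        qed simp
      qed
      show "As \<union> Bs \<union> {p} \<subseteq> E" using pE unfolding As_def Bs_def by blast
    qed
    have xBs: "x \<in> Bs" using A(5) xE xp unfolding Bs_def B_def by blast
    define AT where "AT = H \<inter> As"
    define BT where "BT = H - As"
    have BTBs: "BT \<subseteq> Bs"
    proof
      fix h assume h: "h \<in> BT"
      then have hE: "h \<in> E - {p}" using HE unfolding BT_def by blast
      have "\<phi> h \<notin> A" using h hE unfolding BT_def As_def by blast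
      then show "h \<in> Bs" using phiG[OF hE] hE unfolding Bs_def B_def by blast
    qed
    have RH: "rk M (H \<union> {x, p}) = R"
    proof -
      have "\<forall>e\<in>carrier M. rk M (insert e (H \<union> {x, p})) = rk M (H \<union> {x, p})"
      proof
        fix e assume eM: "e \<in> carrier M"
        show "rk M (insert e (H \<union> {x, p})) = rk M (H \<union> {x, p})"
        proof (cases "e \<in> {x, p}")
          case True
          then have "insert e (H \<union> {x, p}) = H \<union> {x, p}" by blast
          then show ?thesis by simp
        next
          case False
          then have e: "e \<in> E - {x, p}" using eM unfolding E_def by blast
          have lo: "2 \<le> rk M (insert e {x, p})" using rk_ins_ge[OF M, of "{x, p}" e] rxp by simp
          have hi: "rk M (insert e {x, p}) \<le> 3" using rk_insert_le[OF M, of e "{x, p}"] rxp by simp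
          show ?thesis
          proof (cases "rk M (insert e {x, p}) = 3")
            case True
            then obtain h where h: "h \<in> H" "rk M (insert e (insert h {x, p})) = rk M (insert h {x, p})"
              using H5 e by blast
            have b: "insert h {x, p} \<subseteq> H \<union> {x, p}" using h(1) by blast
            show ?thesis using rk_cl_mono[OF M h(2) b] .
          next
            case False
            then have c: "rk M (insert e {x, p}) = rk M {x, p}" using lo hi rxp by simp
            have b: "{x, p} \<subseteq> H \<union> {x, p}" by blast
            show ?thesis using rk_cl_mono[OF M c b] .
          qed
        qed
      qed
      moreover have "H \<union> {x, p} \<subseteq> carrier M" using HE' CxpE by blast
      ultimately show ?thesis using span_rk[OF M] unfolding R_def E_def by blast
    qed
    define a' where "a' = rk M (insert x (As \<union> {p}))"
    define s where "s = rk M (AT \<union> {x, p})"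
    define t where "t = rk M (BT \<union> {x, p})"
    have AsE: "As \<subseteq> E" and BsE: "Bs \<subseteq> E" unfolding As_def Bs_def by auto
    have f1: "R + 1 \<le> a + b"
    proof -
      have sm: "rk M ((As \<union> {p}) \<union> (Bs \<union> {p})) + rk M ((As \<union> {p}) \<inter> (Bs \<union> {p})) \<le> a + b"
        unfolding a_def b_def by (rule rk_submod[OF M])
      have "(As \<union> {p}) \<union> (Bs \<union> {p}) = E" using Eparts by blast
      then have u: "rk M ((As \<union> {p}) \<union> (Bs \<union> {p})) = R" unfolding R_def by (simp only:)
      have "rk M {p} \<le> rk M ((As \<union> {p}) \<inter> (Bs \<union> {p}))" by (intro rk_mono[OF M]) blast
      then show ?thesis using sm rp u by linarith
    qed
    have f2: "a + b < R + 1 + k" using A(4) a_eq b_eq unfolding B_def by simp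
    have f3: "a \<le> a'" unfolding a_def a'_def by (rule rk_ins_ge[OF M])
    have f4: "a' \<le> a + 1" unfolding a_def a'_def using rk_insert_le[OF M] by simp
    have f5: "s \<le> a'" unfolding s_def a'_def AT_def by (intro rk_mono[OF M]) blast
    have f6: "t \<le> b" unfolding t_def b_def using BTBs xBs by (intro rk_mono[OF M]) blast
    have f7: "2 \<le> s" unfolding s_def using rk_mono[OF M, of "{x, p}" "AT \<union> {x, p}"] rxp by simp
    have f8: "2 \<le> t" unfolding t_def using rk_mono[OF M, of "{x, p}" "BT \<union> {x, p}"] rxp by simp
    have f9: "R + 2 \<le> s + t"
    proof -
      have sm: "rk M ((AT \<union> {x, p}) \<union> (BT \<union> {x, p})) + rk M ((AT \<union> {x, p}) \<inter> (BT \<union> {x, p})) \<le> s + t"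
        unfolding s_def t_def by (rule rk_submod[OF M])
      have "(AT \<union> {x, p}) \<union> (BT \<union> {x, p}) = H \<union> {x, p}" unfolding AT_def BT_def by blast
      then have u: "rk M ((AT \<union> {x, p}) \<union> (BT \<union> {x, p})) = R" using RH by (simp only:)
      have "rk M {x, p} \<le> rk M ((AT \<union> {x, p}) \<inter> (BT \<union> {x, p}))" by (intro rk_mono[OF M]) blast
      then show ?thesis using sm rxp u by linarith
    qed
    have fAT: "finite AT" and fBT: "finite BT" unfolding AT_def BT_def using fH by auto
    have f10: "card AT = 0 \<Longrightarrow> s = 2" unfolding s_def using fAT rxp by simp
    have f11: "card BT = 0 \<Longrightarrow> t = 2" unfolding t_def using fBT rxp by simp
    have c3: "rk M (Q \<union> {x, p}) \<le> 3" if "finite Q" "card Q = 1" for Q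
    proof -
      have "rk M (Q \<union> {x, p}) \<le> card (Q \<union> {x, p})" using rk_le_card[OF M] that by simp
      also have "\<dots> \<le> card Q + card {x, p}" by (rule card_Un_le)
      finally show ?thesis using that xp by simp
    qed
    have f12: "card AT = 1 \<Longrightarrow> s \<le> 3" unfolding s_def using c3 fAT by blast
    have f13: "card BT = 1 \<Longrightarrow> t \<le> 3" unfolding t_def using c3 fBT by blast
    have cT: "carrier T = H" unfolding T_def carrier_mi ..
    have HAT: "H - AT = BT" unfolding AT_def BT_def by blast
    have ATH: "AT \<subseteq> H" unfolding AT_def by blast
    have cfT: "conn_fun T AT = int (s - 2) + int (t - 2) - int (R - 2)"
    proof -
      have "AT \<inter> H = AT" "BT \<inter> H = BT" "H \<inter> H = H" unfolding AT_def BT_def by auto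
      then show ?thesis unfolding conn_fun_def cT rkT HAT s_def t_def using RH by simp
    qed
    have R2: "2 \<le> R" using f7 f5 f3 f4 f9 f6 unfolding R_def
      using rk_mono[OF M, of "{x, p}" E] rxp CxpE unfolding E_def by simp
    have f14: "1 \<le> card AT \<Longrightarrow> 1 \<le> card BT \<Longrightarrow> R + 3 \<le> s + t"
    proof -
      assume "1 \<le> card AT" "1 \<le> card BT"
      then have "int 1 \<le> conn_fun T AT" using tc_conn[OF Tc, of AT 1] ATH cT HAT by simp
      then show ?thesis using cfT f7 f8 R2 by linarith
    qed
    have f15: "2 \<le> card AT \<Longrightarrow> 2 \<le> card BT \<Longrightarrow> R + 4 \<le> s + t"
    proof -
      assume "2 \<le> card AT" "2 \<le> card BT"
      then have "int 2 \<le> conn_fun T AT" using tc_conn[OF Tc, of AT 2] ATH cT HAT by simp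
      then show ?thesis using cfT f7 f8 R2 by linarith
    qed
    have f16: "1 \<le> a" unfolding a_def using rk_mono[OF M, of "{p}" "As \<union> {p}"] rp by simp
    have f17: "1 \<le> b" unfolding b_def using rk_mono[OF M, of "{p}" "Bs \<union> {p}"] rp by simp
    have f18: "1 \<le> k \<Longrightarrow> 2 \<le> a" using two[OF A(1)] A(2) a_eq by simp
    have f19: "1 \<le> k \<Longrightarrow> 2 \<le> b" using two[OF BG] A(3) b_eq unfolding B_def by simp
    have f20: "2 \<le> k \<Longrightarrow> 3 \<le> a" using three[OF A(1)] A(2) a_eq by simp
    have f21: "2 \<le> k \<Longrightarrow> 3 \<le> b" using three[OF BG] A(3) b_eq unfolding B_def by simp
    have f22: "a' \<le> R" unfolding a'_def R_def using AsE xE pE by (intro rk_mono[OF M]) blast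
    have f23: "b \<le> R" unfolding b_def R_def using BsE pE by (intro rk_mono[OF M]) blast
    have ar: "a' = a + 1 \<and> a + 1 = R \<and> b \<le> 3 \<and> (3 \<le> b \<longrightarrow> 3 \<le> a) \<and> 2 \<le> a"
      by (rule arith_core[OF kX(1) f1 f2 f3 f4 f5 f6 f7 f8 f9 f10 f11 f12 f13 f14 f15 f16 f17 f18 f19 f20 f21 f22 f23])
    have aa: "a' = a + 1" and ar1: "a + 1 = R" and b3: "b \<le> 3" and b3a: "3 \<le> b \<Longrightarrow> 3 \<le> a" and a2: "2 \<le> a"
      using ar by auto
    define F where "F = {e \<in> E. rk M (insert e (As \<union> {p})) = a}"
    define Cs where "Cs = E - F"
    have FE: "F \<subseteq> E" unfolding F_def by blast
    have AsF: "As \<union> {p} \<subseteq> F"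
    proof
      fix e assume e: "e \<in> As \<union> {p}"
      then have "insert e (As \<union> {p}) = As \<union> {p}" by blast
      then show "e \<in> F" using e AsE pE unfolding F_def a_def by auto
    qed
    have rF: "rk M F = a"
    proof -
      have "\<forall>w\<in>F. rk M (insert w (As \<union> {p})) = rk M (As \<union> {p})" unfolding F_def a_def by blast
      then have "rk M ((As \<union> {p}) \<union> F) = rk M (As \<union> {p})" by (rule rk_cl_union[OF M])
      moreover have "(As \<union> {p}) \<union> F = F" using AsF by blast
      ultimately show ?thesis unfolding a_def by simp
    qed
    have xF: "x \<notin> F" using aa unfolding F_def a'_def by simp
    have pF: "p \<in> F" using AsF by blast
    have xCs: "x \<in> Cs" using xF xE unfolding Cs_def by blast
    have pCs: "p \<notin> Cs" using pF unfolding Cs_def by blast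
    have CsBs: "Cs \<subseteq> Bs" using AsF Eparts unfolding Cs_def by blast
    have rCp: "rk M (insert p Cs) \<le> b" unfolding b_def using CsBs by (intro rk_mono[OF M]) blast
    have insF: "\<forall>e\<in>carrier M - F. rk M (insert e F) = Suc (rk M F)"
    proof
      fix e assume e: "e \<in> carrier M - F"
      have n: "rk M (insert e (As \<union> {p})) \<noteq> a" using e unfolding F_def E_def by blast
      have l1: "rk M (insert e (As \<union> {p})) \<le> rk M (insert e F)" using AsF by (intro rk_mono[OF M]) blast
      have l2: "a \<le> rk M (insert e (As \<union> {p}))" unfolding a_def by (rule rk_ins_ge[OF M])
      have l3: "rk M (insert e F) \<le> Suc (rk M F)" by (rule rk_insert_le[OF M])
      have l4: "rk M F \<le> rk M (insert e F)" by (rule rk_ins_ge[OF M])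
      show "rk M (insert e F) = Suc (rk M F)" using n l1 l2 l3 l4 rF by linarith
    qed
    have FE': "F \<subseteq> carrier M" using FE unfolding E_def .
    have coc: "cocircuit M Cs"
      unfolding Cs_def E_def using cocircuit_compl[OF M FE' _ insF] rF ar1 unfolding R_def E_def by simp
    have fF: "finite F" using finite_subset[OF FE fE] .
    have fCs: "finite Cs" unfolding Cs_def using fE by simp
    have ECs: "carrier M - Cs = F" using FE unfolding Cs_def E_def by blast
    have CsM: "Cs \<subseteq> carrier M" unfolding Cs_def E_def by blast
    have cfM: "conn_fun M Cs = int (rk M Cs) + int a - int R"
      unfolding conn_fun_def ECs rF R_def E_def ..
    have "0 < card Cs" using xCs fCs by (auto simp: card_gt_0_iff)
    then have cCs1: "1 \<le> card Cs" by linarith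
    have "0 < card F" using pF fF by (auto simp: card_gt_0_iff)
    then have cF1: "1 \<le> card F" by linarith
    have c1: "int 1 \<le> conn_fun M Cs" using tc_conn[OF assms(2) CsM, of 1] cCs1 cF1 ECs by simp
    have rC2: "2 \<le> rk M Cs" using c1 cfM ar1 by linarith
    have cCs2: "2 \<le> card Cs" using rk_le_card[OF M fCs] rC2 by linarith
    have cF2: "2 \<le> card F" using rk_le_card[OF M fF] rF a2 by linarith
    have c2: "int 2 \<le> conn_fun M Cs" using tc_conn[OF assms(2) CsM, of 2] cCs2 cF2 ECs by simp
    have rC3: "3 \<le> rk M Cs" using c2 cfM ar1 by linarith
    have rCCp: "rk M Cs \<le> rk M (insert p Cs)" by (rule rk_ins_ge[OF M])
    have rC: "rk M Cs = 3" using rC3 rCCp rCp b3 by linarith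
    have rCp3: "rk M (insert p Cs) = 3" using rC3 rCCp rCp b3 by linarith
    have R4: "4 \<le> rk M (carrier M)" using b3a rC3 rCCp rCp ar1 unfolding R_def E_def by linarith
    have pcl: "p \<in> cl M Cs - Cs" unfolding cl_def using rC rCp3 pCs assms(9) by simp
    have vx: "three_connected (si (contract M {x, p})) \<and> has_minor (si (contract M {x, p})) N"
      using assms(10) unfolding vert_contractible_def .
    have "vertbarrier M N Cs p" unfolding vertbarrier_def using coc rC pcl vx xCs by blast
    then show ?thesis using R4 xCs by blast
  qed
  have RG: "rk M (G \<union> {p}) = R"
  proof -
    have "\<forall>e\<in>carrier M. rk M (insert e (G \<union> {p})) = rk M (G \<union> {p})"
    proof
      fix e assume eM: "e \<in> carrier M"
      show "rk M (insert e (G \<union> {p})) = rk M (G \<union> {p})"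
      proof (cases "e = p")
        case True
        then have "insert e (G \<union> {p}) = G \<union> {p}" by blast
        then show ?thesis by simp
      next
        case False
        then have e: "e \<in> E - {p}" using eM unfolding E_def by blast
        have a: "rk M (insert e (insert (\<phi> e) {p})) = rk M (insert (\<phi> e) {p})" using phi[OF e] by blast
        have b: "insert (\<phi> e) {p} \<subseteq> G \<union> {p}" using phiG[OF e] by blast
        show ?thesis using rk_cl_mono[OF M a b] .
      qed
    qed
    moreover have "G \<union> {p} \<subseteq> carrier M" using GE' CpE by blast
    ultimately show ?thesis using span_rk[OF M] unfolding R_def E_def by blast
  qed
  have r1: "1 \<le> rk M (Y \<union> {p})" for Y using rk_mono[OF M, of "{p}" "Y \<union> {p}"] rp by simp
  have cS: "carrier S = G" unfolding S_def carrier_mi ..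
  have XG: "X \<subseteq> G" and kX1: "k \<le> card X" and kX2: "k \<le> card (G - X)" and cX: "conn_fun S X < int k"
    using kX(2) unfolding k_separation_def cS by auto
  have cf: "conn_fun S X = int (rk M (X \<union> {p}) - 1) + int (rk M ((G - X) \<union> {p}) - 1) - int (R - 1)"
  proof -
    have "X \<inter> G = X" "(G - X) \<inter> G = G - X" "G \<inter> G = G" using XG by auto
    then show ?thesis unfolding conn_fun_def cS rkS using RG by simp
  qed
  have ineq: "rk M (X \<union> {p}) + rk M ((G - X) \<union> {p}) < R + 1 + k"
    using cf cX r1[of X] r1[of "G - X"] r1[of G] RG by linarith
  have pxG: "\<phi> x \<in> G" using phiG xE xp by blast
  show ?thesis
  proof (cases "\<phi> x \<in> X")
    case False
    then show ?thesis using core[of X] XG kX1 kX2 ineq pxG by blast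
  next
    case True
    have d: "G - (G - X) = X" using XG by blast
    have "G - X \<subseteq> G" by blast
    moreover have "rk M ((G - X) \<union> {p}) + rk M ((G - (G - X)) \<union> {p}) < R + 1 + k" using ineq d by simp
    ultimately show ?thesis using core[of "G - X"] d kX1 kX2 True by simp
  qed
qed

end
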